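(* Let $C$ be an independent set of the Kneser graph of flags of type $\{2,3\}$ of $\mathrm{PG}(6,q)$ such that every plane and every solid of $\mathrm{PG}(6,q)$ occurs in at most $q+1$ flags of $C$. For a point $P$ let $\Delta_P(C)$ be the set of flags $(E,S)\in C$ with $P\in E$. Let $P_1,P_2,P_3$ be non-collinear points. (i) If $|\Delta_{P_1}(C)|>(q+1)(6q^6+10q^5+17q^4+15q^3+15q^2+9q+5)$, then there are flags $f_i=(E_i,S_i)\in C$, $i\in\{1,2,3\}$, with $\dim\langle E_1,E_2,E_3\rangle\ge 5$, $P_2,P_3\notin S_1,S_2,S_3$, and $E_i\cap E_j=P_1$ and $P_2,P_3\notin\langle E_i,E_j\rangle$ for all distinct $i,j$. (ii) If there are flags $f_1,f_2,f_3$ with the properties in (i) and $|\Delta_{P_2}(C)|>(q+1)(6q^6+10q^5+17q^4+18q^3+15q^2+9q+5)$, then there are flags $f_i'=(E_i',S_i')\in C$, $i\in\{1,2,3\}$, with $\dim\langle E_1',E_2',E_3'\rangle\ge 5$, $P_1,P_3\notin S_1',S_2',S_3'$, $\dim(S_i\cap S_j')\le 1$ for all $i,j\in\{1,2,3\}$, and $E_i'\cap E_j'=P_2$ and $P_1,P_3\notin\langle E_i',E_j'\rangle$ for all distinct $i,j$.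
   Context: Dimensions are projective (points 0, planes 2, solids 3). A flag of type $\{2,3\}$ is a pair $(E,S)$ of a plane $E$ and a solid $S$ with $E\subseteq S$; in the Kneser graph distinct flags $(E,S),(E',S')$ are adjacent iff $E\cap S'=\emptyset$ and $E'\cap S=\emptyset$. $\langle\cdot\rangle$ denotes the span. *)

theory Defs
  imports "HOL-Analysis.Finite_Cartesian_Product" "HOL-Library.Numeral_Type"
begin

text \<open>The projective space PG(6,q) is modelled as the lattice of linear subspaces
of the 7-dimensional vector space V = F^7 over a finite field F with q = CARD(F) elements.\<close>

type_synonym 'a vec7 = "'a ^ 7"

definition sc :: "'a::field \<Rightarrow> 'a vec7 \<Rightarrow> 'a vec7" where
  "sc c x = (\<chi> i. c * x $ i)"

lemma vector_space_sc: "vector_space (sc :: 'a::field \<Rightarrow> 'a vec7 \<Rightarrow> 'a vec7)"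
  by unfold_locales (simp_all add: sc_def vec_eq_iff algebra_simps)

definition lsub :: "'a::field vec7 set \<Rightarrow> bool" where
  "lsub W = module.subspace sc W"

definition lspan :: "'a::field vec7 set \<Rightarrow> 'a vec7 set" where
  "lspan A = module.span sc A"

definition pdim :: "'a::field vec7 set \<Rightarrow> int" where
  "pdim W = int (vector_space.dim sc W) - 1"

definition is_point :: "'a::field vec7 set \<Rightarrow> bool" where
  "is_point W \<longleftrightarrow> lsub W \<and> pdim W = 0"

definition is_plane :: "'a::field vec7 set \<Rightarrow> bool" where
  "is_plane W \<longleftrightarrow> lsub W \<and> pdim W = 2"

definition is_solid :: "'a::field vec7 set \<Rightarrow> bool" where
  "is_solid W \<longleftrightarrow> lsub W \<and> pdim W = 3"

text \<open>projectively empty intersection = trivial vector intersection\<close>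
definition disjoint_proj :: "'a::field vec7 set \<Rightarrow> 'a vec7 set \<Rightarrow> bool" where
  "disjoint_proj A B \<longleftrightarrow> A \<inter> B = {0}"

definition is_flag :: "'a::field vec7 set \<times> 'a vec7 set \<Rightarrow> bool" where
  "is_flag f \<longleftrightarrow> is_plane (fst f) \<and> is_solid (snd f) \<and> fst f \<subseteq> snd f"

definition kneser_adj :: "'a::field vec7 set \<times> 'a vec7 set \<Rightarrow> 'a vec7 set \<times> 'a vec7 set \<Rightarrow> bool" where
  "kneser_adj f g \<longleftrightarrow> is_flag f \<and> is_flag g \<and> f \<noteq> g \<and>
     disjoint_proj (fst f) (snd g) \<and> disjoint_proj (fst g) (snd f)"

definition kneser_indep :: "('a::field vec7 set \<times> 'a vec7 set) set \<Rightarrow> bool" where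
  "kneser_indep C \<longleftrightarrow> (\<forall>f\<in>C. is_flag f) \<and> (\<forall>f\<in>C. \<forall>g\<in>C. \<not> kneser_adj f g)"

definition Delta :: "'a::field vec7 set \<Rightarrow> ('a vec7 set \<times> 'a vec7 set) set
    \<Rightarrow> ('a vec7 set \<times> 'a vec7 set) set" where
  "Delta P C = {f \<in> C. P \<subseteq> fst f}"

definition good_triple :: "('a::field vec7 set \<times> 'a vec7 set) set \<Rightarrow> 'a vec7 set \<Rightarrow>
    'a vec7 set \<Rightarrow> 'a vec7 set \<Rightarrow> ('a vec7 set \<times> 'a vec7 set) \<Rightarrow>
    ('a vec7 set \<times> 'a vec7 set) \<Rightarrow> ('a vec7 set \<times> 'a vec7 set) \<Rightarrow> bool" where
  "good_triple C P Q R f1 f2 f3 \<longleftrightarrow>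
     (let fs = [f1, f2, f3] in
       (\<forall>f\<in>set fs. f \<in> C) \<and>
       pdim (lspan (fst f1 \<union> fst f2 \<union> fst f3)) \<ge> 5 \<and>
       (\<forall>f\<in>set fs. \<not> Q \<subseteq> snd f \<and> \<not> R \<subseteq> snd f) \<and>
       (\<forall>i<3. \<forall>j<3. i \<noteq> j \<longrightarrow>
          fst (fs ! i) \<inter> fst (fs ! j) = P \<and>
          \<not> Q \<subseteq> lspan (fst (fs ! i) \<union> fst (fs ! j)) \<and>
          \<not> R \<subseteq> lspan (fst (fs ! i) \<union> fst (fs ! j))))"

end

theory Submission
  imports Defs "HOL-Analysis.Cartesian_Space"
begin

lemma sc_eq: "sc = ((*s) :: 'a::field \<Rightarrow> 'a vec7 \<Rightarrow> 'a vec7)"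
  by (intro ext) (simp add: sc_def vector_scalar_mult_def)

lemma lsub_eq: "lsub W = vec.subspace W" unfolding lsub_def sc_eq ..
lemma lspan_eq: "lspan A = vec.span A" unfolding lspan_def sc_eq ..
lemma pdim_eq: "pdim W = int (vec.dim W) - 1" unfolding pdim_def sc_eq ..

lemma card_span_indep:
  fixes B :: "('a::{field,finite}^'n) set"
  assumes "vec.independent B"
  shows "card (vec.span B) = CARD('a) ^ card B"
proof -
  have "finite B" using assms vec.finiteI_independent by blast
  then show ?thesis using assms
  proof (induction B rule: finite_induct)
    case empty
    then show ?case by simp
  next
    case (insert x F)
    have iF: "vec.independent F" and xF: "x \<notin> vec.span F"
      using insert.prems insert.hyps vec.independent_insert[of x F] by (simp_all split: if_splits)
    have eq: "vec.span (insert x F) = (\<lambda>(c,y). c *s x + y) ` (UNIV \<times> vec.span F)"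
    proof
      show "vec.span (insert x F) \<subseteq> (\<lambda>(c,y). c *s x + y) ` (UNIV \<times> vec.span F)"
      proof
        fix z assume "z \<in> vec.span (insert x F)"
        then obtain k where "z - k *s x \<in> vec.span F" using vec.span_insert by blast
        then show "z \<in> (\<lambda>(c,y). c *s x + y) ` (UNIV \<times> vec.span F)"
          by (intro image_eqI[of _ _ "(k, z - k *s x)"]) auto
      qed
    next
      show "(\<lambda>(c,y). c *s x + y) ` (UNIV \<times> vec.span F) \<subseteq> vec.span (insert x F)"
        by (clarsimp simp: vec.span_breakdown_eq) (metis add_diff_cancel_left')
    qed
    have inj: "inj_on (\<lambda>(c,y). c *s x + y) (UNIV \<times> vec.span F)"
    proof (rule inj_onI, clarsimp)
      fix c y c' y'
      assume y: "y \<in> vec.span F" and y': "y' \<in> vec.span F" and e: "c *s x + y = c' *s x + y'"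
      show "c = c' \<and> y = y'"
      proof (cases "c = c'")
        case True then show ?thesis using e by simp
      next
        case False
        have "(c - c') *s x = y' - y" using e
          by (simp add: vector_sub_rdistrib algebra_simps)
        then have "inverse (c - c') *s ((c - c') *s x) = inverse (c - c') *s (y' - y)" by simp
        then have "x = inverse (c - c') *s (y' - y)" using False
          by (simp add: vector_smult_assoc)
        moreover have "inverse (c - c') *s (y' - y) \<in> vec.span F"
          by (intro vec.span_scale vec.span_diff y y')
        ultimately show ?thesis using xF by simp
      qed
    qed
    have "card (vec.span (insert x F)) = card ((UNIV::'a set) \<times> vec.span F)"
      unfolding eq using inj by (simp add: card_image)
    also have "\<dots> = CARD('a) * card (vec.span F)" by (simp add: card_cartesian_product)
    also have "\<dots> = CARD('a) ^ card (insert x F)" using insert iF by simp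
    finally show ?case .
  qed
qed

lemma card_subspace:
  fixes S :: "('a::{field,finite}^'n) set"
  assumes "vec.subspace S"
  shows "card S = CARD('a) ^ vec.dim S"
proof -
  obtain B where B: "B \<subseteq> S" "vec.independent B" "S \<subseteq> vec.span B" "card B = vec.dim S"
    using vec.basis_exists by blast
  have "vec.span B = S" using B assms vec.span_subspace by blast
  then show ?thesis using card_span_indep[OF B(2)] B(4) by simp
qed


definition Xs :: "('a::{field,finite}^'n) set \<Rightarrow> ('a^'n) set \<Rightarrow> nat \<Rightarrow> ('a^'n) list set" where
  "Xs U W m = {vs. length vs = m \<and> set vs \<subseteq> W \<and> vec.dim (U \<union> set vs) = vec.dim U + m}"

definition Subs :: "('a::{field,finite}^'n) set \<Rightarrow> ('a^'n) set \<Rightarrow> nat \<Rightarrow> ('a^'n) set set" where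
  "Subs U W k = {K. vec.subspace K \<and> U \<subseteq> K \<and> K \<subseteq> W \<and> vec.dim K = k}"

lemma finite_Xs[simp]: "finite (Xs U W m)"
  by (rule finite_subset[of _ "{xs. set xs \<subseteq> UNIV \<and> length xs = m}"])
     (auto simp: Xs_def intro: finite_lists_length_eq[of UNIV m, simplified])

lemma dim_Un_list_le: "vec.dim (U \<union> set vs) \<le> vec.dim U + length vs"
proof (induction vs)
  case Nil then show ?case by simp
next
  case (Cons v vs)
  have "U \<union> set (v # vs) = insert v (U \<union> set vs)" by auto
  then show ?case using Cons vec.dim_insert[of v "U \<union> set vs"] by (simp split: if_splits)
qed

lemma Xs_Suc:
  "Xs U W (Suc m) = (\<lambda>(vs,v). v # vs) ` (SIGMA vs:Xs U W m. W - vec.span (U \<union> set vs))"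
proof (intro equalityI subsetI)
  fix xs assume xs: "xs \<in> Xs U W (Suc m)"
  then obtain v vs where xsd: "xs = v # vs" unfolding Xs_def by (cases xs) auto
  have ins: "U \<union> set (v # vs) = insert v (U \<union> set vs)" by auto
  have d: "vec.dim (insert v (U \<union> set vs)) = vec.dim U + Suc m" and l: "length vs = m"
    and s: "set vs \<subseteq> W" "v \<in> W"
    using xs unfolding xsd Xs_def ins by auto
  have le: "vec.dim (U \<union> set vs) \<le> vec.dim U + m" using dim_Un_list_le[of U vs] l by simp
  have nv: "v \<notin> vec.span (U \<union> set vs)"
    using d le vec.dim_insert[of v "U \<union> set vs"] by (auto split: if_splits)
  have "vec.dim (U \<union> set vs) = vec.dim U + m"
    using d le nv vec.dim_insert[of v "U \<union> set vs"] by simp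
  then have "vs \<in> Xs U W m" using l s unfolding Xs_def by simp
  then show "xs \<in> (\<lambda>(vs,v). v # vs) ` (SIGMA vs:Xs U W m. W - vec.span (U \<union> set vs))"
    using xsd nv s by (auto intro!: image_eqI[of _ _ "(vs, v)"])
next
  fix xs assume "xs \<in> (\<lambda>(vs,v). v # vs) ` (SIGMA vs:Xs U W m. W - vec.span (U \<union> set vs))"
  then obtain vs v where xsd: "xs = v # vs" and vs: "vs \<in> Xs U W m" and v: "v \<in> W"
    and nv: "v \<notin> vec.span (U \<union> set vs)" by auto
  have ins: "U \<union> set (v # vs) = insert v (U \<union> set vs)" by auto
  show "xs \<in> Xs U W (Suc m)"
    using vs v nv vec.dim_insert[of v "U \<union> set vs"] unfolding xsd Xs_def ins by auto
qed

lemma card_Xs: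
  fixes U W :: "('a::{field,finite}^'n) set"
  assumes "vec.subspace U" "vec.subspace W" "U \<subseteq> W"
  shows "card (Xs U W m) = (\<Prod>i<m. CARD('a) ^ vec.dim W - CARD('a) ^ (vec.dim U + i))"
proof (induction m)
  case 0
  have "Xs U W 0 = {[]}" unfolding Xs_def by auto
  then show ?case by simp
next
  case (Suc m)
  have inj: "inj_on (\<lambda>(vs,v). v # vs) (SIGMA vs:Xs U W m. W - vec.span (U \<union> set vs))"
    by (auto simp: inj_on_def)
  have c: "card (W - vec.span (U \<union> set vs)) = CARD('a) ^ vec.dim W - CARD('a) ^ (vec.dim U + m)"
    if "vs \<in> Xs U W m" for vs
  proof -
    have sub: "vec.span (U \<union> set vs) \<subseteq> W"
      using that assms by (intro vec.span_minimal) (auto simp: Xs_def)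
    have "card (W - vec.span (U \<union> set vs)) = card W - card (vec.span (U \<union> set vs))"
      using sub by (simp add: card_Diff_subset)
    also have "\<dots> = CARD('a) ^ vec.dim W - CARD('a) ^ (vec.dim U + m)"
      using that card_subspace[OF assms(2)] card_subspace[OF vec.subspace_span, of "U \<union> set vs"]
      by (simp add: Xs_def)
    finally show ?thesis .
  qed
  have "card (Xs U W (Suc m)) = card (SIGMA vs:Xs U W m. W - vec.span (U \<union> set vs))"
    unfolding Xs_Suc using inj by (rule card_image)
  also have "\<dots> = (\<Sum>vs\<in>Xs U W m. card (W - vec.span (U \<union> set vs)))"
    by (rule card_SigmaI) auto
  also have "\<dots> = (\<Sum>vs\<in>Xs U W m. CARD('a) ^ vec.dim W - CARD('a) ^ (vec.dim U + m))"
    using c by (rule sum.cong[OF refl])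
  also have "\<dots> = card (Xs U W m) * (CARD('a) ^ vec.dim W - CARD('a) ^ (vec.dim U + m))"
    by simp
  finally show ?case using Suc by (simp add: mult.commute)
qed

lemma count_subs:
  fixes U W :: "('a::{field,finite}^'n) set"
  assumes "vec.subspace U" "vec.subspace W" "U \<subseteq> W" "vec.dim U \<le> k"
  shows "card (Subs U W k) * (\<Prod>i<k - vec.dim U. CARD('a) ^ k - CARD('a) ^ (vec.dim U + i))
       = (\<Prod>i<k - vec.dim U. CARD('a) ^ vec.dim W - CARD('a) ^ (vec.dim U + i))"
proof -
  define m where "m = k - vec.dim U"
  have km: "k = vec.dim U + m" using assms(4) m_def by simp
  have eqU: "Xs U W m = (\<Union>K\<in>Subs U W k. Xs U K m)"
  proof (intro equalityI subsetI)
    fix vs assume vs: "vs \<in> Xs U W m"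
    let ?K = "vec.span (U \<union> set vs)"
    have "?K \<subseteq> W" using vs assms by (intro vec.span_minimal) (auto simp: Xs_def)
    moreover have "U \<subseteq> ?K" using vec.span_superset[of "U \<union> set vs"] by blast
    ultimately have "?K \<in> Subs U W k" unfolding Subs_def using vs km
      by (auto simp: Xs_def)
    moreover have "vs \<in> Xs U ?K m" using vs vec.span_superset[of "U \<union> set vs"] by (auto simp: Xs_def)
    ultimately show "vs \<in> (\<Union>K\<in>Subs U W k. Xs U K m)" by blast
  next
    fix vs assume "vs \<in> (\<Union>K\<in>Subs U W k. Xs U K m)"
    then show "vs \<in> Xs U W m" by (auto simp: Xs_def Subs_def)
  qed
  have key: "K = vec.span (U \<union> set vs)" if "K \<in> Subs U W k" "vs \<in> Xs U K m" for K vs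
  proof -
    have "vec.span (U \<union> set vs) \<subseteq> K" using that by (intro vec.span_minimal) (auto simp: Xs_def Subs_def)
    moreover have "vec.dim (vec.span (U \<union> set vs)) = vec.dim K" using that km by (simp add: Xs_def Subs_def)
    ultimately show ?thesis using that vec.subspace_dim_equal[of "vec.span (U \<union> set vs)" K]
      by (simp add: Subs_def)
  qed
  have "card (Xs U W m) = (\<Sum>K\<in>Subs U W k. card (Xs U K m))"
    unfolding eqU
  proof (rule card_UN_disjoint)
    show "finite (Subs U W k)" by simp
    show "\<forall>i\<in>Subs U W k. finite (Xs U i m)" by simp
    show "\<forall>i\<in>Subs U W k. \<forall>j\<in>Subs U W k. i \<noteq> j \<longrightarrow> Xs U i m \<inter> Xs U j m = {}"
      using key by blast
  qed
  also have "\<dots> = (\<Sum>K\<in>Subs U W k. \<Prod>i<m. CARD('a) ^ k - CARD('a) ^ (vec.dim U + i))"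
    by (rule sum.cong[OF refl]) (auto simp: Subs_def assms intro!: card_Xs)
  finally show ?thesis using card_Xs[OF assms(1-3), of m] by (simp add: m_def)
qed


lemma dim_UNIV7: "vec.dim (UNIV :: ('a::field vec7) set) = 7"
  by (simp add: card_cart_basis)

lemma card_ge2: "CARD('a::{field,finite}) \<ge> 2"
proof -
  have "card {0::'a, 1} \<le> CARD('a)" by (rule card_mono) auto
  then show ?thesis by simp
qed

lemma pdiff: "b \<le> a \<Longrightarrow> 1 \<le> (q::nat) \<Longrightarrow> int (q^a - q^b) = int q^a - int q^b"
  by (simp add: of_nat_diff power_increasing)

lemma pdiff1: "1 \<le> a \<Longrightarrow> 1 \<le> (q::nat) \<Longrightarrow> int (q^a - q) = int q^a - int q"
  using pdiff[of 1 a q] by simp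

lemma pdiff0: "1 \<le> (q::nat) \<Longrightarrow> int (q^a - 1) = int q^a - 1"
  by (simp add: of_nat_diff)

lemma cancel_aux: "(N::nat) * D = R \<Longrightarrow> int A * int D = int R \<Longrightarrow> 0 < D \<Longrightarrow> N = A"
  by (metis mult_cancel_right nat_neq_iff not_less0 of_nat_eq_iff of_nat_mult)

lemma pos_aux: "b < a \<Longrightarrow> 2 \<le> (q::nat) \<Longrightarrow> 0 < q^a - q^b"
  by (simp add: power_strict_increasing)

lemma pos1: "1 < a \<Longrightarrow> 2 \<le> (q::nat) \<Longrightarrow> q < q^a"
  using power_strict_increasing[of 1 a q] by simp
lemma pos0: "0 < a \<Longrightarrow> 2 \<le> (q::nat) \<Longrightarrow> Suc 0 < q^a"
  using power_strict_increasing[of 0 a q] by simp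

lemma prod2: "(\<Prod>i<(2::nat). f i) = (f 0 * f 1 :: nat)"
  by (simp add: numeral_2_eq_2)
lemma prod1: "(\<Prod>i<(1::nat). f i) = (f 0 :: nat)"
  by simp
lemma prod3: "(\<Prod>i<(3::nat). f i) = (f 0 * f 1 * f 2 :: nat)"
  by (simp add: numeral_3_eq_3 numeral_2_eq_2)

lemma count_subs':
  fixes U W :: "('a::{field,finite}^'n) set"
  assumes "vec.subspace U" "vec.subspace W" "U \<subseteq> W" "vec.dim U = u" "vec.dim W = w" "k = u + m"
  shows "card (Subs U W k) * (\<Prod>i<m. CARD('a) ^ (u+m) - CARD('a) ^ (u + i))
       = (\<Prod>i<m. CARD('a) ^ w - CARD('a) ^ (u + i))"
  using count_subs[OF assms(1-3), of k] assms(4-6) by simp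

lemma I1:
  fixes L :: "'a::{field,finite} vec7 set"
  assumes "vec.subspace L" "vec.dim L = 2"
  shows "card (Subs L UNIV 4) = (CARD('a)^4+CARD('a)^3+CARD('a)^2+CARD('a)+1)*(CARD('a)^2+1)"
proof -
  define q where "q = CARD('a)"
  have q: "2 \<le> q" using card_ge2 q_def by simp
  have e: "card (Subs L UNIV 4) * ((q^4 - q^2) * (q^4 - q^3)) = (q^7 - q^2) * (q^7 - q^3)"
    using count_subs'[OF assms(1) vec.subspace_UNIV subset_UNIV assms(2) dim_UNIV7, of 4 2]
    unfolding prod2 q_def by (simp add: eval_nat_numeral)
  show ?thesis unfolding q_def[symmetric]
  proof (rule cancel_aux[OF e])
    show "int ((q^4+q^3+q^2+q+1)*(q^2+1)) * int ((q^4 - q^2) * (q^4 - q^3)) = int ((q^7 - q^2) * (q^7 - q^3))"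
      using q by (simp add: pdiff pdiff1 pdiff0) algebra
    show "0 < (q^4 - q^2) * (q^4 - q^3)" using q by (simp add: pos_aux pos1 pos0)
  qed
qed

lemma I2:
  fixes U W :: "'a::{field,finite} vec7 set"
  assumes "vec.subspace U" "vec.dim U = 2"
  shows "card (Subs U UNIV 3) = CARD('a)^4+CARD('a)^3+CARD('a)^2+CARD('a)+1"
proof -
  define q where "q = CARD('a)"
  have q: "2 \<le> q" using card_ge2 q_def by simp
  have e: "card (Subs U UNIV 3) * (q^3 - q^2) = q^7 - q^2"
    using count_subs'[OF assms(1) vec.subspace_UNIV subset_UNIV assms(2) dim_UNIV7, of 3 1]
    unfolding prod1 q_def by (simp add: eval_nat_numeral)
  show ?thesis unfolding q_def[symmetric]
  proof (rule cancel_aux[OF e])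
    show "int (q^4+q^3+q^2+q+1) * int (q^3 - q^2) = int (q^7 - q^2)"
      using q by (simp add: pdiff pdiff1 pdiff0) algebra
    show "0 < q^3 - q^2" using q by (simp add: pos_aux pos1 pos0)
  qed
qed

lemma I3:
  fixes U W :: "'a::{field,finite} vec7 set"
  assumes "vec.subspace U" "vec.subspace W" "U \<subseteq> W" "vec.dim U = 1" "vec.dim W = 4"
  shows "card (Subs U W 2) = CARD('a)^2+CARD('a)+1"
proof -
  define q where "q = CARD('a)"
  have q: "2 \<le> q" using card_ge2 q_def by simp
  have e: "card (Subs U W 2) * (q^2 - q) = q^4 - q"
    using count_subs'[OF assms, of 2 1]
    unfolding prod1 q_def by (simp add: eval_nat_numeral)
  show ?thesis unfolding q_def[symmetric]
  proof (rule cancel_aux[OF e])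
    show "int (q^2+q+1) * int (q^2 - q) = int (q^4 - q)"
      using q by (simp add: pdiff pdiff1 pdiff0) algebra
    show "0 < q^2 - q" using q by (simp add: pos_aux pos1 pos0)
  qed
qed

lemma I4:
  fixes U W :: "'a::{field,finite} vec7 set"
  assumes "vec.subspace U" "vec.subspace W" "U \<subseteq> W" "vec.dim U = 1" "vec.dim W = 3"
  shows "card (Subs U W 2) = CARD('a)+1"
proof -
  define q where "q = CARD('a)"
  have q: "2 \<le> q" using card_ge2 q_def by simp
  have e: "card (Subs U W 2) * (q^2 - q) = q^3 - q"
    using count_subs'[OF assms, of 2 1]
    unfolding prod1 q_def by (simp add: eval_nat_numeral)
  show ?thesis unfolding q_def[symmetric]
  proof (rule cancel_aux[OF e])
    show "int (q+1) * int (q^2 - q) = int (q^3 - q)"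
      using q by (simp add: pdiff pdiff1 pdiff0) algebra
    show "0 < q^2 - q" using q by (simp add: pos_aux pos1 pos0)
  qed
qed

lemma I5:
  fixes U W :: "'a::{field,finite} vec7 set"
  assumes "vec.subspace U" "vec.subspace W" "U \<subseteq> W" "vec.dim U = 1" "vec.dim W = 5"
  shows "card (Subs U W 3) = (CARD('a)^2+1)*(CARD('a)^2+CARD('a)+1)"
proof -
  define q where "q = CARD('a)"
  have q: "2 \<le> q" using card_ge2 q_def by simp
  have e: "card (Subs U W 3) * ((q^3 - q)*(q^3-q^2)) = (q^5 - q)*(q^5-q^2)"
    using count_subs'[OF assms, of 3 2]
    unfolding prod2 q_def by (simp add: eval_nat_numeral)
  show ?thesis unfolding q_def[symmetric]
  proof (rule cancel_aux[OF e])
    show "int ((q^2+1)*(q^2+q+1)) * int ((q^3 - q)*(q^3-q^2)) = int ((q^5 - q)*(q^5-q^2))"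
      using q by (simp add: pdiff pdiff1 pdiff0) algebra
    show "0 < (q^3 - q)*(q^3-q^2)" using q by (simp add: pos_aux pos1 pos0)
  qed
qed

lemma I6:
  fixes U W :: "'a::{field,finite} vec7 set"
  assumes "vec.subspace W" "vec.dim W = 4"
  shows "card (Subs {0} W 3) = CARD('a)^3+CARD('a)^2+CARD('a)+1"
proof -
  define q where "q = CARD('a)"
  have q: "2 \<le> q" using card_ge2 q_def by simp
  have e: "card (Subs {0} W 3) * ((q^3 - 1)*(q^3 - q)*(q^3-q^2)) = (q^4 - 1)*(q^4 - q)*(q^4-q^2)"
    using count_subs'[OF vec.subspace_single_0 assms(1) _ _ assms(2), of 0 3 3] vec.subspace_0[OF assms(1)]
    unfolding prod3 q_def by (simp add: eval_nat_numeral)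
  show ?thesis unfolding q_def[symmetric]
  proof (rule cancel_aux[OF e])
    show "int (q^3+q^2+q+1) * int ((q^3 - 1)*(q^3 - q)*(q^3-q^2)) = int ((q^4 - 1)*(q^4 - q)*(q^4-q^2))"
      using q by (simp add: pdiff pdiff1 pdiff0) algebra
    show "0 < (q^3 - 1)*(q^3 - q)*(q^3-q^2)" using q by (simp add: pos_aux pos1 pos0)
  qed
qed

lemma I7:
  fixes U W :: "'a::{field,finite} vec7 set"
  assumes "vec.subspace U" "vec.subspace W" "U \<subseteq> W" "vec.dim U = 1" "vec.dim W = 4"
  shows "card (Subs U W 3) = CARD('a)^2+CARD('a)+1"
proof -
  define q where "q = CARD('a)"
  have q: "2 \<le> q" using card_ge2 q_def by simp
  have e: "card (Subs U W 3) * ((q^3 - q)*(q^3-q^2)) = (q^4 - q)*(q^4-q^2)"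
    using count_subs'[OF assms, of 3 2]
    unfolding prod2 q_def by (simp add: eval_nat_numeral)
  show ?thesis unfolding q_def[symmetric]
  proof (rule cancel_aux[OF e])
    show "int (q^2+q+1) * int ((q^3 - q)*(q^3-q^2)) = int ((q^4 - q)*(q^4-q^2))"
      using q by (simp add: pdiff pdiff1 pdiff0) algebra
    show "0 < (q^3 - q)*(q^3-q^2)" using q by (simp add: pos_aux pos1 pos0)
  qed
qed


lemma dim_Un:
  fixes A B :: "('a::field^'n) set"
  assumes "vec.subspace A" "vec.subspace B"
  shows "vec.dim (vec.span (A \<union> B)) + vec.dim (A \<inter> B) = vec.dim A + vec.dim B"
proof -
  have sA: "vec.span A = A" and sB: "vec.span B = B" using assms by simp_all
  have "vec.span (A \<union> B) = {x + y |x y. x \<in> A \<and> y \<in> B}"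
    unfolding vec.span_Un sA sB by (rule refl)
  then show ?thesis using vec.dim_sums_Int[OF assms] by simp
qed

lemma sub_eq_dim:
  fixes A B :: "('a::field^'n) set"
  assumes "vec.subspace A" "vec.subspace B" "A \<subseteq> B" "vec.dim B \<le> vec.dim A"
  shows "A = B"
  using vec.subspace_dim_equal[OF assms] .

lemma line_exists:
  fixes P A :: "('a::field^'n) set"
  assumes "vec.subspace P" "vec.dim P = 1" "vec.subspace A" "P \<subseteq> A" "2 \<le> vec.dim A"
  shows "\<exists>L. vec.subspace L \<and> vec.dim L = 2 \<and> P \<subseteq> L \<and> L \<subseteq> A"
proof -
  have "\<not> A \<subseteq> P"
    using vec.dim_subset[of A P] assms by auto
  then obtain v where v: "v \<in> A" "v \<notin> P" by blast
  let ?L = "vec.span (insert v P)"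
  have sP: "vec.span P = P" using assms by simp
  have "vec.dim ?L = 2" using vec.dim_insert[of v P, unfolded sP] assms v by simp
  moreover have "P \<subseteq> ?L" using vec.span_superset[of "insert v P"] by blast
  moreover have "?L \<subseteq> A" using assms v by (intro vec.span_minimal) auto
  ultimately show ?thesis by blast
qed

lemma meet_point:
  fixes A Q :: "('a::field^'n) set"
  assumes "vec.subspace A" "vec.subspace Q" "vec.dim Q = 1" "\<not> Q \<subseteq> A"
  shows "vec.dim (A \<inter> Q) = 0"
proof (rule ccontr)
  assume "vec.dim (A \<inter> Q) \<noteq> 0"
  then have "1 \<le> vec.dim (A \<inter> Q)" by linarith
  then have "A \<inter> Q = Q" using assms vec.subspace_inter[OF assms(1,2)]
    by (intro sub_eq_dim) auto
  then show False using assms by blast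
qed

lemma dim_span_le:
  fixes A B :: "('a::field^'n) set"
  assumes "vec.subspace A" "vec.subspace B"
  shows "vec.dim (vec.span (A \<union> B)) \<le> vec.dim A + vec.dim B"
  using dim_Un[OF assms] by linarith

lemma plane_prop:
  fixes E E' P Q :: "('a::field^'n) set"
  assumes E': "vec.subspace E'" "vec.dim E' = 3"
    and E: "vec.subspace E" "vec.dim E = 3"
    and P: "vec.subspace P" "vec.dim P = 1" "P \<subseteq> E" "P \<subseteq> E'"
    and Q: "vec.subspace Q" "vec.dim Q = 1" "\<not> Q \<subseteq> E'"
    and noL: "\<And>L. vec.subspace L \<Longrightarrow> vec.dim L = 2 \<Longrightarrow> P \<subseteq> L \<Longrightarrow> L \<subseteq> vec.span (E' \<union> Q) \<Longrightarrow> \<not> L \<subseteq> E"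
  shows "E \<inter> E' = P" "\<not> Q \<subseteq> vec.span (E \<union> E')"
proof -
  have sT: "E' \<subseteq> vec.span (E' \<union> Q)" using vec.span_superset[of "E' \<union> Q"] by blast
  have sI: "vec.subspace (E \<inter> E')" using vec.subspace_inter E E' by blast
  have "vec.dim (E \<inter> E') < 2"
  proof (rule ccontr)
    assume "\<not> vec.dim (E \<inter> E') < 2"
    then obtain L where "vec.subspace L" "vec.dim L = 2" "P \<subseteq> L" "L \<subseteq> E \<inter> E'"
      using line_exists[OF P(1,2) sI] P by auto
    then show False using noL sT by blast
  qed
  then show EE: "E \<inter> E' = P"
    using P sI by (intro sub_eq_dim[symmetric]) auto
  show "\<not> Q \<subseteq> vec.span (E \<union> E')"
  proof
    assume Qs: "Q \<subseteq> vec.span (E \<union> E')"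
    let ?W = "vec.span (E \<union> E')"
    let ?T = "vec.span (E' \<union> Q)"
    have dW: "vec.dim ?W = 5" using dim_Un[OF E(1) E'(1)] EE E E' P by simp
    have TW: "?T \<subseteq> ?W" using Qs vec.span_superset[of "E \<union> E'"]
      by (intro vec.span_minimal) auto
    have dT: "vec.dim ?T = 4" using dim_Un[OF E'(1) Q(1)] meet_point[OF E'(1) Q] E' Q by simp
    have "vec.span (E \<union> ?T) \<subseteq> ?W" using TW vec.span_superset[of "E \<union> E'"]
      by (intro vec.span_minimal) auto
    then have "vec.dim (vec.span (E \<union> ?T)) \<le> 5" using vec.dim_subset dW by (metis vec.dim_span)
    then have d2: "2 \<le> vec.dim (E \<inter> ?T)" using dim_Un[OF E(1) vec.subspace_span[of "E' \<union> Q"]] dT E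
      by simp
    have sI2: "vec.subspace (E \<inter> ?T)" using vec.subspace_inter E by blast
    obtain L where "vec.subspace L" "vec.dim L = 2" "P \<subseteq> L" "L \<subseteq> E \<inter> ?T"
      using line_exists[OF P(1,2) sI2 _ d2] P sT by auto
    then show False using noL by blast
  qed
qed


lemma plane_iff: "is_plane E \<longleftrightarrow> vec.subspace E \<and> vec.dim E = 3"
  unfolding is_plane_def lsub_eq pdim_eq by auto
lemma solid_iff: "is_solid E \<longleftrightarrow> vec.subspace E \<and> vec.dim E = 4"
  unfolding is_solid_def lsub_eq pdim_eq by auto
lemma point_iff: "is_point E \<longleftrightarrow> vec.subspace E \<and> vec.dim E = 1"
  unfolding is_point_def lsub_eq pdim_eq by auto
lemma flag_iff: "is_flag f \<longleftrightarrow> vec.subspace (fst f) \<and> vec.dim (fst f) = 3 \<and>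
   vec.subspace (snd f) \<and> vec.dim (snd f) = 4 \<and> fst f \<subseteq> snd f"
  unfolding is_flag_def plane_iff solid_iff by auto

lemma pick:
  fixes C :: "('a::{field,finite} vec7 set \<times> 'a vec7 set) set"
  assumes planes: "\<And>E. is_plane E \<Longrightarrow> card {f \<in> C. fst f = E} \<le> q + 1"
    and solids: "\<And>S. is_solid S \<Longrightarrow> card {f \<in> C. snd f = S} \<le> q + 1"
    and BP: "\<forall>E\<in>BP. is_plane E" and BS: "\<forall>S\<in>BS. is_solid S"
    and c: "card BP + card BS \<le> N" and big: "(q+1)*N < card D" and DC: "D \<subseteq> C"
  shows "\<exists>f\<in>D. fst f \<notin> BP \<and> snd f \<notin> BS"
proof (rule ccontr)
  assume "\<not> ?thesis"
  then have "D \<subseteq> (\<Union>E\<in>BP. {f \<in> C. fst f = E}) \<union> (\<Union>S\<in>BS. {f \<in> C. snd f = S})"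
    using DC by blast
  then have "card D \<le> card ((\<Union>E\<in>BP. {f \<in> C. fst f = E}) \<union> (\<Union>S\<in>BS. {f \<in> C. snd f = S}))"
    by (rule card_mono[rotated]) simp
  also have "\<dots> \<le> card (\<Union>E\<in>BP. {f \<in> C. fst f = E}) + card (\<Union>S\<in>BS. {f \<in> C. snd f = S})"
    by (rule card_Un_le)
  also have "\<dots> \<le> (\<Sum>E\<in>BP. card {f \<in> C. fst f = E}) + (\<Sum>S\<in>BS. card {f \<in> C. snd f = S})"
    by (intro add_mono card_UN_le) simp_all
  also have "\<dots> \<le> card BP * (q+1) + card BS * (q+1)"
  proof (rule add_mono)
    show "(\<Sum>E\<in>BP. card {f \<in> C. fst f = E}) \<le> card BP * (q+1)"
      using sum_bounded_above[of BP "\<lambda>E. card {f \<in> C. fst f = E}" "q+1"] BP planes by simp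
    show "(\<Sum>S\<in>BS. card {f \<in> C. snd f = S}) \<le> card BS * (q+1)"
      using sum_bounded_above[of BS "\<lambda>S. card {f \<in> C. snd f = S}" "q+1"] BS solids by simp
  qed
  also have "\<dots> \<le> (q+1) * N" using c
    by (metis add_mult_distrib mult.commute mult_le_mono2)
  finally show False using big by simp
qed

lemma num3:
  fixes q K :: nat
  assumes "2 \<le> q"
  shows "2*((q^4+q^3+q^2+q+1)*(q^2+1)) + K + (4*q^2+3*q+3)*(q^4+q^3+q^2+q+1) + (q^2+1)*(q^2+q+1)
     \<le> 6*q^6+10*q^5+17*q^4+15*q^3+15*q^2+9*q+5 + K"
proof -
  have e: "2*((q^4+q^3+q^2+q+1)*(q^2+1)) + K + (4*q^2+3*q+3)*(q^4+q^3+q^2+q+1) + (q^2+1)*(q^2+q+1)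
     = 6*q^6+9*q^5+15*q^4+15*q^3+16*q^2+9*q+6 + K" by algebra
  have a: "2^3 \<le> q^3" using assms by (rule power_mono) simp
  have b: "4 \<le> q^2" using power_mono[OF assms, of 2] by simp
  have "q^2 * 2 \<le> q^2 * q^3" using a by (intro mult_le_mono2) simp
  moreover have "q^5 = q^2 * q^3" by algebra
  ultimately have "q^2 + 1 \<le> q^5" using b by linarith
  then show ?thesis unfolding e by linarith
qed

lemma solid_span:
  fixes E X :: "'a::{field,finite} vec7 set"
  assumes "vec.subspace E" "vec.dim E = 3" "vec.subspace X" "vec.dim X = 1" "\<not> X \<subseteq> E"
  shows "vec.dim (vec.span (E \<union> X)) = 4"
  using dim_Un[OF assms(1,3)] meet_point[OF assms(1,3,4,5)] assms by simp

lemma card_PL: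
  fixes Ls :: "'a::{field,finite} vec7 set set"
  assumes "\<forall>L\<in>Ls. vec.subspace L \<and> vec.dim L = 2"
  shows "card {E. is_plane E \<and> (\<exists>L\<in>Ls. L \<subseteq> E)} \<le> card Ls * (CARD('a)^4+CARD('a)^3+CARD('a)^2+CARD('a)+1)"
proof -
  have "{E. is_plane E \<and> (\<exists>L\<in>Ls. L \<subseteq> E)} = (\<Union>L\<in>Ls. Subs L UNIV 3)"
    by (auto simp: Subs_def plane_iff)
  also have "card \<dots> \<le> (\<Sum>L\<in>Ls. card (Subs L UNIV 3))" by (rule card_UN_le) simp
  also have "\<dots> = (\<Sum>L\<in>Ls. CARD('a)^4+CARD('a)^3+CARD('a)^2+CARD('a)+1)"
    using assms by (intro sum.cong refl I2) auto
  finally show ?thesis by simp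
qed


lemma all3: "(\<forall>i<(3::nat). P i) \<longleftrightarrow> P 0 \<and> P 1 \<and> P 2"
  by (auto simp: less_Suc_eq eval_nat_numeral)

lemma core:
  fixes C :: "('a::{field,finite} vec7 set \<times> 'a vec7 set) set"
    and P Q R :: "'a vec7 set" and XS :: "'a vec7 set set"
  assumes flags: "\<forall>f\<in>C. is_flag f"
    and planes: "\<And>E. is_plane E \<Longrightarrow> card {f \<in> C. fst f = E} \<le> CARD('a) + 1"
    and solids: "\<And>S. is_solid S \<Longrightarrow> card {f \<in> C. snd f = S} \<le> CARD('a) + 1"
    and P: "vec.subspace P" "vec.dim P = 1"
    and Q: "vec.subspace Q" "vec.dim Q = 1"
    and R: "vec.subspace R" "vec.dim R = 1"
    and PQ: "vec.dim (vec.span (P \<union> Q)) = 2" and PR: "vec.dim (vec.span (P \<union> R)) = 2"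
    and XS: "card XS \<le> K"
    and big: "(CARD('a)+1)*(6*CARD('a)^6+10*CARD('a)^5+17*CARD('a)^4+15*CARD('a)^3+15*CARD('a)^2+9*CARD('a)+5 + K) < card (Delta P C)"
  shows "\<exists>g1 g2 g3. good_triple C P Q R g1 g2 g3 \<and> snd g1 \<notin> XS \<and> snd g2 \<notin> XS \<and> snd g3 \<notin> XS"
proof -
  define q where "q = CARD('a)"
  have q2: "2 \<le> q" using card_ge2 q_def by simp
  define N where "N = 6*q^6+10*q^5+17*q^4+15*q^3+15*q^2+9*q+5 + K"
  define A where "A = (q^4+q^3+q^2+q+1)*(q^2+1)"
  define B where "B = q^4+q^3+q^2+q+1"
  define X where "X = (q^2+1)*(q^2+q+1)"
  have num: "2*A + K + (4*q^2+3*q+3)*B + X \<le> N"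
    unfolding A_def B_def X_def N_def using num3[OF q2] by simp
  have big': "(q+1)*N < card (Delta P C)" using big unfolding N_def q_def .
  define SQ where "SQ = Subs (vec.span (P \<union> Q)) UNIV 4"
  define SR where "SR = Subs (vec.span (P \<union> R)) UNIV 4"
  have cSQ: "card SQ = A" unfolding SQ_def A_def q_def using I1[OF vec.subspace_span PQ] .
  have cSR: "card SR = A" unfolding SR_def A_def q_def using I1[OF vec.subspace_span PR] .
  define BS where "BS = SQ \<union> SR \<union> (XS \<inter> Collect is_solid)"
  have BSs: "\<forall>S\<in>BS. is_solid S" by (auto simp: BS_def SQ_def SR_def Subs_def solid_iff)
  have cBS: "card BS \<le> 2*A + K"
  proof -
    have "card BS \<le> card (SQ \<union> SR) + card (XS \<inter> Collect is_solid)" unfolding BS_def by (rule card_Un_le)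
    moreover have "card (SQ \<union> SR) \<le> card SQ + card SR" by (rule card_Un_le)
    moreover have "card (XS \<inter> Collect is_solid) \<le> card XS" by (rule card_mono) auto
    ultimately show ?thesis using cSQ cSR XS by linarith
  qed
  define ok where "ok f \<longleftrightarrow> f \<in> C \<and> P \<subseteq> fst f \<and> vec.subspace (fst f) \<and> vec.dim (fst f) = 3 \<and>
     vec.subspace (snd f) \<and> vec.dim (snd f) = 4 \<and> fst f \<subseteq> snd f \<and> \<not> Q \<subseteq> snd f \<and> \<not> R \<subseteq> snd f \<and> snd f \<notin> XS" for f
  have step: "\<exists>f. ok f \<and> fst f \<notin> BP" if BP: "\<forall>E\<in>BP. is_plane E" and cBP: "card BP + (2*A + K) \<le> N" for BP
  proof -
    have c: "card BP + card BS \<le> N" using cBS cBP by linarith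
    have DC: "Delta P C \<subseteq> C" by (auto simp: Delta_def)
    obtain f where f: "f \<in> Delta P C" "fst f \<notin> BP" "snd f \<notin> BS"
      using pick[of C q, OF planes[folded q_def] solids[folded q_def] BP BSs c big' DC] by blast
    have fl: "is_flag f" "f \<in> C" "P \<subseteq> fst f" using f flags by (auto simp: Delta_def)
    have nQ: "\<not> Q \<subseteq> snd f"
    proof
      assume "Q \<subseteq> snd f"
      then have "vec.span (P \<union> Q) \<subseteq> snd f" using fl by (intro vec.span_minimal) (auto simp: flag_iff)
      then have "snd f \<in> SQ" using fl by (auto simp: SQ_def Subs_def flag_iff)
      then show False using f by (auto simp: BS_def)
    qed
    have nR: "\<not> R \<subseteq> snd f"
    proof
      assume "R \<subseteq> snd f"
      then have "vec.span (P \<union> R) \<subseteq> snd f" using fl by (intro vec.span_minimal) (auto simp: flag_iff)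
      then have "snd f \<in> SR" using fl by (auto simp: SR_def Subs_def flag_iff)
      then show False using f by (auto simp: BS_def)
    qed
    have "snd f \<notin> XS" using f fl by (auto simp: BS_def flag_iff solid_iff)
    then have "ok f" using fl nQ nR by (auto simp: ok_def flag_iff)
    then show ?thesis using f by blast
  qed
  define LT where "LT Y = Subs P Y 2" for Y
  define PL where "PL Ls = {E :: 'a vec7 set. is_plane E \<and> (\<exists>L\<in>Ls. L \<subseteq> E)}" for Ls
  have okQ: "\<not> Q \<subseteq> fst g" "\<not> R \<subseteq> fst g" if "ok g" for g using that by (auto simp: ok_def)
  have cT: "card (LT (vec.span (fst g \<union> Y))) = q^2+q+1"
    if "ok g" "vec.subspace Y" "vec.dim Y = 1" "\<not> Y \<subseteq> fst g" for g Y
  proof -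
    have "P \<subseteq> vec.span (fst g \<union> Y)" using that vec.span_superset[of "fst g \<union> Y"] by (auto simp: ok_def)
    moreover have "vec.dim (vec.span (fst g \<union> Y)) = 4" using that by (intro solid_span) (auto simp: ok_def)
    ultimately show ?thesis unfolding LT_def q_def using I3[OF P(1) vec.subspace_span] P by simp
  qed
  have cE: "card (LT (fst g)) = q+1" if "ok g" for g
    unfolding LT_def q_def using I4[OF P(1), of "fst g"] that P by (auto simp: ok_def)
  have LTs: "LT (fst g) \<subseteq> LT (vec.span (fst g \<union> Y))" for g Y
    unfolding LT_def Subs_def using vec.span_superset[of "fst g \<union> Y"] by auto
  have LTl: "\<forall>L\<in>LT Y. vec.subspace L \<and> vec.dim L = 2" for Y by (auto simp: LT_def Subs_def)
  have pp: "E \<inter> fst g = P \<and> \<not> Y \<subseteq> vec.span (E \<union> fst g)"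
    if "ok g" "vec.subspace Y" "vec.dim Y = 1" "\<not> Y \<subseteq> fst g" "vec.subspace E" "vec.dim E = 3"
       "P \<subseteq> E" "LT (vec.span (fst g \<union> Y)) \<subseteq> Ls" "E \<notin> PL Ls" for g Y E Ls
  proof -
    have noL: "\<not> L \<subseteq> E" if "vec.subspace L" "vec.dim L = 2" "P \<subseteq> L" "L \<subseteq> vec.span (fst g \<union> Y)" for L
    proof
      assume "L \<subseteq> E"
      moreover have "L \<in> Ls" using that \<open>LT (vec.span (fst g \<union> Y)) \<subseteq> Ls\<close> by (auto simp: LT_def Subs_def)
      ultimately have "E \<in> PL Ls" using \<open>vec.subspace E\<close> \<open>vec.dim E = 3\<close> by (auto simp: PL_def plane_iff)
      then show False using \<open>E \<notin> PL Ls\<close> by blast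
    qed
    show ?thesis using plane_prop[of "fst g" E P Y] that noL P by (auto simp: ok_def)
  qed
  have cPL: "card (PL Ls) \<le> card Ls * B" if "\<forall>L\<in>Ls. vec.subspace L \<and> vec.dim L = 2" for Ls
    unfolding PL_def B_def q_def using card_PL[OF that] .
  have PLp: "\<forall>E\<in>PL Ls. is_plane E" for Ls by (auto simp: PL_def)

  obtain g1 where g1: "ok g1" using step[of "{}"] num by auto
  define E1 where "E1 = fst g1"
  define Lines1 where "Lines1 = LT (vec.span (E1 \<union> Q)) \<union> LT (vec.span (E1 \<union> R))"
  have cL1: "card Lines1 \<le> 2*q^2+q+1"
  proof -
    have "card Lines1 + card (LT (vec.span (E1 \<union> Q)) \<inter> LT (vec.span (E1 \<union> R)))
       = card (LT (vec.span (E1 \<union> Q))) + card (LT (vec.span (E1 \<union> R)))"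
      unfolding Lines1_def using card_Un_Int[of "LT (vec.span (E1 \<union> Q))" "LT (vec.span (E1 \<union> R))"] by simp
    moreover have "card (LT E1) \<le> card (LT (vec.span (E1 \<union> Q)) \<inter> LT (vec.span (E1 \<union> R)))"
      using LTs[of g1] unfolding E1_def by (intro card_mono) auto
    ultimately show ?thesis using cT[OF g1 Q okQ(1)[OF g1]] cT[OF g1 R okQ(2)[OF g1]] cE[OF g1]
      unfolding E1_def by linarith
  qed
  have L1l: "\<forall>L\<in>Lines1. vec.subspace L \<and> vec.dim L = 2" using LTl by (auto simp: Lines1_def)
  have "card (PL Lines1) \<le> (2*q^2+q+1) * B" using cPL[OF L1l] cL1
    by (meson le_trans mult_le_mono1)
  moreover have "(2*q^2+q+1) * B \<le> (4*q^2+3*q+3)*B" by (intro mult_le_mono1) simp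
  ultimately obtain g2 where g2: "ok g2" "fst g2 \<notin> PL Lines1" using step[OF PLp, of Lines1] num by force
  define E2 where "E2 = fst g2"
  have p21Q: "E2 \<inter> E1 = P \<and> \<not> Q \<subseteq> vec.span (E2 \<union> E1)"
    using pp[OF g1 Q okQ(1)[OF g1], of E2 Lines1] g2 by (auto simp: E1_def E2_def ok_def Lines1_def)
  have p21R: "E2 \<inter> E1 = P \<and> \<not> R \<subseteq> vec.span (E2 \<union> E1)"
    using pp[OF g1 R okQ(2)[OF g1], of E2 Lines1] g2 by (auto simp: E1_def E2_def ok_def Lines1_def)
  define Lines2 where "Lines2 = Lines1 \<union> LT (vec.span (E2 \<union> Q)) \<union> LT (vec.span (E2 \<union> R))"
  have cL2: "card Lines2 \<le> 4*q^2+3*q+3"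
  proof -
    have "card Lines2 \<le> card Lines1 + card (LT (vec.span (E2 \<union> Q))) + card (LT (vec.span (E2 \<union> R)))"
      unfolding Lines2_def by (meson card_Un_le add_le_mono1 le_trans)
    then show ?thesis using cT[OF g2(1) Q okQ(1)[OF g2(1)]] cT[OF g2(1) R okQ(2)[OF g2(1)]] cL1
      unfolding E2_def by linarith
  qed
  have L2l: "\<forall>L\<in>Lines2. vec.subspace L \<and> vec.dim L = 2" using LTl L1l by (auto simp: Lines2_def)
  define U where "U = vec.span (E1 \<union> E2)"
  have sE: "vec.subspace E1" "vec.dim E1 = 3" "vec.subspace E2" "vec.dim E2 = 3" "P \<subseteq> E1" "P \<subseteq> E2"
    using g1 g2 by (auto simp: ok_def E1_def E2_def)
  have dU: "vec.dim U = 5"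
    using dim_Un[of E1 E2] sE p21Q P unfolding U_def by (simp add: Int_commute)
  define XP where "XP = Subs P U 3"
  have cXP: "card XP = X" unfolding XP_def X_def q_def
    using I5[OF P(1) vec.subspace_span _ P(2)] dU sE vec.span_superset[of "E1 \<union> E2"]
    unfolding U_def by auto
  have XPp: "\<forall>E\<in>XP. is_plane E" by (auto simp: XP_def Subs_def plane_iff)
  have "card (PL Lines2 \<union> XP) \<le> card (PL Lines2) + card XP" by (rule card_Un_le)
  moreover have "card (PL Lines2) \<le> (4*q^2+3*q+3) * B" using cPL[OF L2l] cL2
    by (meson le_trans mult_le_mono1)
  ultimately have "card (PL Lines2 \<union> XP) + (2*A+K) \<le> N" using num cXP by linarith
  then obtain g3 where g3: "ok g3" "fst g3 \<notin> PL Lines2 \<union> XP"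
    using step[of "PL Lines2 \<union> XP"] PLp XPp by blast
  define E3 where "E3 = fst g3"
  have sE3: "vec.subspace E3" "vec.dim E3 = 3" "P \<subseteq> E3" using g3 by (auto simp: ok_def E3_def)
  have p31Q: "E3 \<inter> E1 = P \<and> \<not> Q \<subseteq> vec.span (E3 \<union> E1)"
    using pp[OF g1 Q okQ(1)[OF g1], of E3 Lines2] g3 sE3 by (auto simp: E1_def E3_def Lines1_def Lines2_def)
  have p31R: "E3 \<inter> E1 = P \<and> \<not> R \<subseteq> vec.span (E3 \<union> E1)"
    using pp[OF g1 R okQ(2)[OF g1], of E3 Lines2] g3 sE3 by (auto simp: E1_def E3_def Lines1_def Lines2_def)
  have p32Q: "E3 \<inter> E2 = P \<and> \<not> Q \<subseteq> vec.span (E3 \<union> E2)"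
    using pp[OF g2(1) Q okQ(1)[OF g2(1)], of E3 Lines2] g3 sE3 by (auto simp: E2_def E3_def Lines2_def)
  have p32R: "E3 \<inter> E2 = P \<and> \<not> R \<subseteq> vec.span (E3 \<union> E2)"
    using pp[OF g2(1) R okQ(2)[OF g2(1)], of E3 Lines2] g3 sE3 by (auto simp: E2_def E3_def Lines2_def)
  have nU: "\<not> E3 \<subseteq> U" using g3 sE3 by (auto simp: XP_def Subs_def E3_def)
  have d6: "6 \<le> vec.dim (E1 \<union> E2 \<union> E3)"
  proof -
    have "vec.span (E1 \<union> E2) \<subset> vec.span (E1 \<union> E2 \<union> E3)"
    proof
      show "vec.span (E1 \<union> E2) \<subseteq> vec.span (E1 \<union> E2 \<union> E3)" by (rule vec.span_mono) auto
      show "vec.span (E1 \<union> E2) \<noteq> vec.span (E1 \<union> E2 \<union> E3)"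
        using nU vec.span_superset[of "E1 \<union> E2 \<union> E3"] unfolding U_def by auto
    qed
    then have "vec.dim (E1 \<union> E2) < vec.dim (E1 \<union> E2 \<union> E3)" by (rule vec.dim_psubset)
    then show ?thesis using dU unfolding U_def by simp
  qed
  have Int_c: "E1 \<inter> E2 = P" "E1 \<inter> E3 = P" "E2 \<inter> E3 = P" using p21Q p31Q p32Q by blast+
  have Un_c: "vec.span (E1 \<union> E2) = vec.span (E2 \<union> E1)" "vec.span (E1 \<union> E3) = vec.span (E3 \<union> E1)"
     "vec.span (E2 \<union> E3) = vec.span (E3 \<union> E2)" by (simp_all add: Un_commute)
  have "good_triple C P Q R g1 g2 g3"
    unfolding good_triple_def Let_def all3 lspan_eq pdim_eq
    using g1 g2(1) g3(1) d6 Int_c Un_c p21Q p21R p31Q p31R p32Q p32R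
    by (auto simp: ok_def E1_def E2_def E3_def Int_commute)
  moreover have "snd g1 \<notin> XS" "snd g2 \<notin> XS" "snd g3 \<notin> XS" using g1 g2(1) g3(1) by (simp_all add: ok_def)
  ultimately show ?thesis by blast
qed


lemma two_points:
  fixes A B :: "'a::{field,finite} vec7 set"
  assumes "vec.subspace A" "vec.dim A = 1" "vec.subspace B" "vec.dim B = 1" "\<not> B \<subseteq> A"
  shows "vec.dim (vec.span (A \<union> B)) = 2"
  using dim_Un[OF assms(1,3)] meet_point[OF assms(1,3,4,5)] assms by simp

lemma gt_facts:
  assumes "good_triple C P Q R f1 f2 f3"
  shows "f1 \<in> C" "f2 \<in> C" "f3 \<in> C" "P \<subseteq> fst f1" "P \<subseteq> fst f2" "P \<subseteq> fst f3"
    "\<not> Q \<subseteq> snd f1" "\<not> Q \<subseteq> snd f2" "\<not> Q \<subseteq> snd f3"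
    "\<not> R \<subseteq> snd f1" "\<not> R \<subseteq> snd f2" "\<not> R \<subseteq> snd f3"
  using assms unfolding good_triple_def Let_def all3 by (auto dest!: sym[of _ P])

lemma xs_card:
  fixes S0 P1 P2 :: "'a::{field,finite} vec7 set"
  assumes S0: "vec.subspace S0" "vec.dim S0 = 4"
    and P1: "vec.subspace P1" "vec.dim P1 = 1" "P1 \<subseteq> S0"
    and P2: "vec.subspace P2" "vec.dim P2 = 1" "\<not> P2 \<subseteq> S0"
  shows "card {S. vec.subspace S \<and> vec.dim S = 4 \<and> P2 \<subseteq> S \<and> \<not> P1 \<subseteq> S \<and> 3 \<le> vec.dim (S0 \<inter> S)}
         \<le> CARD('a)^3"
proof -
  let ?X = "{S. vec.subspace S \<and> vec.dim S = 4 \<and> P2 \<subseteq> S \<and> \<not> P1 \<subseteq> S \<and> 3 \<le> vec.dim (S0 \<inter> S)}"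
  let ?Pi = "Subs {0} S0 3 - Subs P1 S0 3"
  have mem: "S0 \<inter> S \<in> ?Pi \<and> S = vec.span ((S0 \<inter> S) \<union> P2)" if "S \<in> ?X" for S
  proof -
    have S: "vec.subspace S" "vec.dim S = 4" "P2 \<subseteq> S" "\<not> P1 \<subseteq> S" "3 \<le> vec.dim (S0 \<inter> S)"
      using that by auto
    have sp: "vec.subspace (S0 \<inter> S)" using S0 S vec.subspace_inter by blast
    have d3: "vec.dim (S0 \<inter> S) = 3"
    proof (rule ccontr)
      assume "vec.dim (S0 \<inter> S) \<noteq> 3"
      then have "4 \<le> vec.dim (S0 \<inter> S)" using S by linarith
      then have "S0 \<inter> S = S0" using sp S0 by (intro sub_eq_dim) auto
      then have "S0 = S" using S0 S by (intro sub_eq_dim) auto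
      then show False using S P2 by blast
    qed
    have z: "0 \<in> S0 \<inter> S" using sp vec.subspace_0 by blast
    have in1: "S0 \<inter> S \<in> Subs {0} S0 3" using sp d3 z by (auto simp: Subs_def)
    have in2: "S0 \<inter> S \<notin> Subs P1 S0 3" using S by (auto simp: Subs_def)
    have nP2: "\<not> P2 \<subseteq> S0 \<inter> S" using P2 by blast
    have "vec.dim (vec.span ((S0 \<inter> S) \<union> P2)) = 4"
      using dim_Un[OF sp P2(1)] meet_point[OF sp P2(1,2) nP2] d3 P2 by simp
    moreover have "vec.span ((S0 \<inter> S) \<union> P2) \<subseteq> S" using S by (intro vec.span_minimal) auto
    ultimately have "vec.span ((S0 \<inter> S) \<union> P2) = S" using S by (intro sub_eq_dim) auto
    then show ?thesis using in1 in2 by simp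
  qed
  have "card ?X \<le> card ?Pi"
  proof (rule card_inj_on_le[of "\<lambda>S. S0 \<inter> S"])
    show "inj_on (\<lambda>S. S0 \<inter> S) ?X" using mem by (metis (no_types, lifting) inj_onI)
    show "(\<lambda>S. S0 \<inter> S) ` ?X \<subseteq> ?Pi" using mem by blast
  qed simp
  also have "card ?Pi = card (Subs {0} S0 3) - card (Subs P1 S0 3)"
  proof (rule card_Diff_subset)
    show "Subs P1 S0 3 \<subseteq> Subs {0} S0 3" by (auto simp: Subs_def vec.subspace_0)
  qed simp
  also have "\<dots> = CARD('a)^3"
    using I6[OF S0] I7[OF P1(1) S0(1) P1(3) P1(2) S0(2)] by simp
  finally show ?thesis .
qed


theorem lemma4p1:
  fixes C :: "('a::{field,finite} vec7 set \<times> 'a vec7 set) set"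
    and P1 P2 P3 :: "'a vec7 set"
  defines "q \<equiv> CARD('a)"
  assumes indep: "kneser_indep C"
    and planes: "\<And>E. is_plane E \<Longrightarrow> card {f \<in> C. fst f = E} \<le> q + 1"
    and solids: "\<And>S. is_solid S \<Longrightarrow> card {f \<in> C. snd f = S} \<le> q + 1"
    and pts: "is_point P1" "is_point P2" "is_point P3"
    and noncol: "pdim (lspan (P1 \<union> P2 \<union> P3)) = 2"
  shows
    "(card (Delta P1 C) > (q+1)*(6*q^6+10*q^5+17*q^4+15*q^3+15*q^2+9*q+5) \<longrightarrow>
       (\<exists>f1 f2 f3. good_triple C P1 P2 P3 f1 f2 f3))
     \<and>
     (\<forall>f1 f2 f3. good_triple C P1 P2 P3 f1 f2 f3 \<and>
        card (Delta P2 C) > (q+1)*(6*q^6+10*q^5+17*q^4+18*q^3+15*q^2+9*q+5) \<longrightarrow>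
        (\<exists>g1 g2 g3. good_triple C P2 P1 P3 g1 g2 g3 \<and>
           (\<forall>f\<in>{f1,f2,f3}. \<forall>g\<in>{g1,g2,g3}. pdim (snd f \<inter> snd g) \<le> 1)))"
proof -
  have flags: "\<forall>f\<in>C. is_flag f" using indep by (simp add: kneser_indep_def)
  have p1: "vec.subspace P1" "vec.dim P1 = 1" using pts(1) by (simp_all add: point_iff)
  have p2: "vec.subspace P2" "vec.dim P2 = 1" using pts(2) by (simp_all add: point_iff)
  have p3: "vec.subspace P3" "vec.dim P3 = 1" using pts(3) by (simp_all add: point_iff)
  have d3: "vec.dim (vec.span (P1 \<union> P2 \<union> P3)) = 3" using noncol by (simp add: lspan_eq pdim_eq)
  have le2: "vec.dim (vec.span (A \<union> B)) \<le> 2"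
    if "vec.subspace A" "vec.dim A = 1" "vec.subspace B" "vec.dim B = 1" for A B :: "'a vec7 set"
    using dim_span_le[OF that(1,3)] that by simp
  have n21: "\<not> P2 \<subseteq> P1"
  proof
    assume "P2 \<subseteq> P1" then have "P1 \<union> P2 \<union> P3 = P1 \<union> P3" by blast
    then show False using d3 le2[OF p1 p3] by simp
  qed
  have n31: "\<not> P3 \<subseteq> P1"
  proof
    assume "P3 \<subseteq> P1" then have "P1 \<union> P2 \<union> P3 = P1 \<union> P2" by blast
    then show False using d3 le2[OF p1 p2] by simp
  qed
  have n12: "\<not> P1 \<subseteq> P2"
  proof
    assume "P1 \<subseteq> P2" then have "P1 \<union> P2 \<union> P3 = P2 \<union> P3" by blast
    then show False using d3 le2[OF p2 p3] by simp
  qed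
  have n32: "\<not> P3 \<subseteq> P2"
  proof
    assume "P3 \<subseteq> P2" then have "P1 \<union> P2 \<union> P3 = P1 \<union> P2" by blast
    then show False using d3 le2[OF p1 p2] by simp
  qed
  have d12: "vec.dim (vec.span (P1 \<union> P2)) = 2" using two_points[OF p1 p2 n21] .
  have d13: "vec.dim (vec.span (P1 \<union> P3)) = 2" using two_points[OF p1 p3 n31] .
  have d21: "vec.dim (vec.span (P2 \<union> P1)) = 2" using two_points[OF p2 p1 n12] .
  have d23: "vec.dim (vec.span (P2 \<union> P3)) = 2" using two_points[OF p2 p3 n32] .
  have planes': "\<And>E. is_plane E \<Longrightarrow> card {f \<in> C. fst f = E} \<le> CARD('a) + 1"
    using planes unfolding q_def .
  have solids': "\<And>S. is_solid S \<Longrightarrow> card {f \<in> C. snd f = S} \<le> CARD('a) + 1"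
    using solids unfolding q_def .
  have partI: "\<exists>f1 f2 f3. good_triple C P1 P2 P3 f1 f2 f3"
    if "card (Delta P1 C) > (q+1)*(6*q^6+10*q^5+17*q^4+15*q^3+15*q^2+9*q+5)"
  proof -
    have "(CARD('a)+1)*(6*CARD('a)^6+10*CARD('a)^5+17*CARD('a)^4+15*CARD('a)^3+15*CARD('a)^2+9*CARD('a)+5 + 0) < card (Delta P1 C)"
      using that unfolding q_def by simp
    from core[OF flags planes' solids' p1 p2 p3 d12 d13 _ this, of "{}"] show ?thesis by auto
  qed
  have partII: "\<exists>g1 g2 g3. good_triple C P2 P1 P3 g1 g2 g3 \<and>
           (\<forall>f\<in>{f1,f2,f3}. \<forall>g\<in>{g1,g2,g3}. pdim (snd f \<inter> snd g) \<le> 1)"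
    if gt: "good_triple C P1 P2 P3 f1 f2 f3"
      and big: "card (Delta P2 C) > (q+1)*(6*q^6+10*q^5+17*q^4+18*q^3+15*q^2+9*q+5)" for f1 f2 f3
  proof -
    define XSf where "XSf f = {S. vec.subspace S \<and> vec.dim S = 4 \<and> P2 \<subseteq> S \<and> \<not> P1 \<subseteq> S \<and> 3 \<le> vec.dim (snd f \<inter> S)}"
      for f :: "'a vec7 set \<times> 'a vec7 set"
    define XS where "XS = XSf f1 \<union> XSf f2 \<union> XSf f3"
    have cf: "card (XSf f) \<le> q^3" if "f \<in> C" "P1 \<subseteq> fst f" "\<not> P2 \<subseteq> snd f" for f
    proof -
      have "is_flag f" using that flags by blast
      then have "vec.subspace (snd f)" "vec.dim (snd f) = 4" "P1 \<subseteq> snd f"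
        using that by (auto simp: flag_iff)
      then show ?thesis unfolding XSf_def q_def
        using xs_card[of "snd f" P1 P2] p1 p2 that by simp
    qed
    note gf = gt_facts[OF gt]
    have cXS: "card XS \<le> 3*q^3"
    proof -
      have "card XS \<le> card (XSf f1 \<union> XSf f2) + card (XSf f3)" unfolding XS_def by (rule card_Un_le)
      moreover have "card (XSf f1 \<union> XSf f2) \<le> card (XSf f1) + card (XSf f2)" by (rule card_Un_le)
      ultimately show ?thesis using cf[of f1] cf[of f2] cf[of f3] gf by linarith
    qed
    have "(CARD('a)+1)*(6*CARD('a)^6+10*CARD('a)^5+17*CARD('a)^4+15*CARD('a)^3+15*CARD('a)^2+9*CARD('a)+5 + 3*q^3) < card (Delta P2 C)"
      using big unfolding q_def by (simp add: algebra_simps)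
    from core[OF flags planes' solids' p2 p1 p3 d21 d23 cXS this]
    obtain g1 g2 g3 where g: "good_triple C P2 P1 P3 g1 g2 g3" "snd g1 \<notin> XS" "snd g2 \<notin> XS" "snd g3 \<notin> XS"
      by blast
    note gg = gt_facts[OF g(1)]
    have "pdim (snd f \<inter> snd g) \<le> 1" if f: "f \<in> {f1,f2,f3}" and gm: "g \<in> {g1,g2,g3}" for f g
    proof -
      have gC: "g \<in> C" "P2 \<subseteq> fst g" "\<not> P1 \<subseteq> snd g" "snd g \<notin> XS" using gm gg g by auto
      then have "is_flag g" using flags by blast
      then have gs: "vec.subspace (snd g)" "vec.dim (snd g) = 4" "P2 \<subseteq> snd g" using gC by (auto simp: flag_iff)
      have "snd g \<notin> XSf f" using gC f unfolding XS_def by auto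
      then have "vec.dim (snd f \<inter> snd g) < 3" using gs gC unfolding XSf_def by auto
      then show ?thesis by (simp add: pdim_eq)
    qed
    then show ?thesis using g(1) by blast
  qed
  show ?thesis using partI partII by blast
qed

end
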